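(* Let $X,Y$ be unbounded balleans such that the product ballean $X\times Y$ is normal. Then: (1) $\operatorname{add}(\mathcal B_X)=\operatorname{cof}(\mathcal B_X)=\operatorname{add}(\mathcal B_Y)=\operatorname{cof}(\mathcal B_Y)$; (2) the bornology $\mathcal B_{X\times Y}$ has a linearly ordered base; (3) the balleans $X$ and $Y$ have bounded growth.
   Context: A ballean is a pair $(X,\mathcal E_X)$ where $X$ is a set and $\mathcal E_X$ is a family of subsets of $X\times X$ (called entourages) such that: each $E\in\mathcal E_X$ contains the diagonal $\Delta_X$; for any $E,F\in\mathcal E_X$ there is $D\in\mathcal E_X$ with $E\circ F^{-1}\subset D$ (composition $E\circ F=\{(x,z):\exists y\ (x,y)\in E,(y,z)\in F\}$, inverse $F^{-1}=\{(y,x):(x,y)\in F\}$); and $\bigcup\mathcal E_X=X\times X$. For $E\in\mathcal E_X$, $x\in X$, $A\subset X$: $E[x]=\{y:(x,y)\in E\}$, $E[A]=\bigcup_{a\in A}E[a]$. $B\subset X$ is bounded if $B\subset E[x]$ for some $E\in\mathcal E_X$, $x\in X$; $\mathcal B_X$ is the family of bounded sets (bornology), ordered by inclusion; $X$ is unbounded if $X\notin\mathcal B_X$. Sets $A,B$ are asymptotically disjoint if $E[A]\cap E[B]\in\mathcal B_X$ for all $E\in\mathcal E_X$; $U$ is an asymptotic neighborhood of $A$ if $E[A]\setminus U\in\mathcal B_X$ for all $E$; $X$ is normal if any two asymptotically disjoint sets have disjoint asymptotic neighborhoods. The product $X\times Y$ of balleans has entourages $\{((x,y),(x',y')):(x,x')\in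 E_1,(y,y')\in E_2\}$ for $E_1\in\mathcal E_X$, $E_2\in\mathcal E_Y$. For a poset $P$, $\operatorname{add}(P)$ is the least cardinality of a subset of $P$ without upper bound and $\operatorname{cof}(P)$ the least cardinality of a cofinal subset (both $=1$ if $P$ has a largest element). A linearly ordered base of $\mathcal B_X$ is a subfamily linearly ordered by inclusion such that each bounded set is contained in a member of it. A ballean $X$ has bounded growth if there is $G\subset X\times X$ such that $G[B]$ is bounded for every bounded $B\subset X$, and for every $E\in\mathcal E_X$ there is a bounded $B\subset X$ with $E[x]\subset G[x]$ for all $x\in X\setminus B$. *)

theory Defs
  imports Main
begin

text \<open>A ballean on the type 'a (its support is UNIV), given by its family of entourages.
  Composition E o F in the paper is relcomp (E O F); F^-1 is converse.\<close>
definition ballean :: "('a \<times> 'a) set set \<Rightarrow> bool" where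
  "ballean \<E> \<longleftrightarrow> (\<forall>E\<in>\<E>. Id \<subseteq> E) \<and>
     (\<forall>E\<in>\<E>. \<forall>F\<in>\<E>. \<exists>D\<in>\<E>. E O converse F \<subseteq> D) \<and> \<Union>\<E> = UNIV"

text \<open>E[x] = E `` {x}, E[A] = E `` A.\<close>
definition bbounded :: "('a \<times> 'a) set set \<Rightarrow> 'a set \<Rightarrow> bool" where
  "bbounded \<E> B \<longleftrightarrow> (\<exists>E\<in>\<E>. \<exists>x. B \<subseteq> E `` {x})"

definition bornology :: "('a \<times> 'a) set set \<Rightarrow> 'a set set" where
  "bornology \<E> = {B. bbounded \<E> B}"

definition unbounded_ballean :: "('a \<times> 'a) set set \<Rightarrow> bool" where
  "unbounded_ballean \<E> \<longleftrightarrow> \<not> bbounded \<E> UNIV"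

definition asymp_disjoint :: "('a \<times> 'a) set set \<Rightarrow> 'a set \<Rightarrow> 'a set \<Rightarrow> bool" where
  "asymp_disjoint \<E> A B \<longleftrightarrow> (\<forall>E\<in>\<E>. bbounded \<E> (E `` A \<inter> E `` B))"

definition asymp_nbhd :: "('a \<times> 'a) set set \<Rightarrow> 'a set \<Rightarrow> 'a set \<Rightarrow> bool" where
  "asymp_nbhd \<E> U A \<longleftrightarrow> (\<forall>E\<in>\<E>. bbounded \<E> (E `` A - U))"

definition normal_ballean :: "('a \<times> 'a) set set \<Rightarrow> bool" where
  "normal_ballean \<E> \<longleftrightarrow> (\<forall>A B. asymp_disjoint \<E> A B \<longrightarrow>
     (\<exists>U V. asymp_nbhd \<E> U A \<and> asymp_nbhd \<E> V B \<and> U \<inter> V = {}))"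

definition prod_ballean :: "('a \<times> 'a) set set \<Rightarrow> ('b \<times> 'b) set set \<Rightarrow> (('a \<times> 'b) \<times> ('a \<times> 'b)) set set" where
  "prod_ballean \<E> \<F> = {{((x,y),(x',y')). (x,x') \<in> E1 \<and> (y,y') \<in> E2} | E1 E2. E1 \<in> \<E> \<and> E2 \<in> \<F>}"

definition has_ub :: "'a set set \<Rightarrow> 'a set set \<Rightarrow> bool" where
  "has_ub P F \<longleftrightarrow> (\<exists>u\<in>P. \<forall>A\<in>F. A \<subseteq> u)"

definition cofinal_in :: "'a set set \<Rightarrow> 'a set set \<Rightarrow> bool" where
  "cofinal_in P F \<longleftrightarrow> F \<subseteq> P \<and> (\<forall>A\<in>P. \<exists>C\<in>F. A \<subseteq> C)"

definition is_add :: "'a set set \<Rightarrow> 'a set set \<Rightarrow> bool" where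
  "is_add P F \<longleftrightarrow> F \<subseteq> P \<and> \<not> has_ub P F \<and>
     (\<forall>G. G \<subseteq> P \<and> \<not> has_ub P G \<longrightarrow> (card_of F, card_of G) \<in> ordLeq)"

definition is_cof :: "'a set set \<Rightarrow> 'a set set \<Rightarrow> bool" where
  "is_cof P F \<longleftrightarrow> cofinal_in P F \<and>
     (\<forall>G. cofinal_in P G \<longrightarrow> (card_of F, card_of G) \<in> ordLeq)"

definition has_linear_base :: "('a \<times> 'a) set set \<Rightarrow> bool" where
  "has_linear_base \<E> \<longleftrightarrow> (\<exists>L \<subseteq> bornology \<E>. (\<forall>A\<in>L. \<forall>B\<in>L. A \<subseteq> B \<or> B \<subseteq> A) \<and>
     (\<forall>B\<in>bornology \<E>. \<exists>C\<in>L. B \<subseteq> C))"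

definition bounded_growth :: "('a \<times> 'a) set set \<Rightarrow> bool" where
  "bounded_growth \<E> \<longleftrightarrow> (\<exists>G. (\<forall>B. bbounded \<E> B \<longrightarrow> bbounded \<E> (G `` B)) \<and>
     (\<forall>E\<in>\<E>. \<exists>B. bbounded \<E> B \<and> (\<forall>x. x \<notin> B \<longrightarrow> E `` {x} \<subseteq> G `` {x})))"

end

theory Submission
  imports Defs
begin

lemma ent_ex: "ballean \<E> \<Longrightarrow> \<exists>E\<in>\<E>. (x,y) \<in> E"
  unfolding ballean_def by blast
lemma ent_Id: "ballean \<E> \<Longrightarrow> E \<in> \<E> \<Longrightarrow> Id \<subseteq> E"
  unfolding ballean_def by blast
lemma ent_inv: assumes "ballean \<E>" "F \<in> \<E>" shows "\<exists>D\<in>\<E>. converse F \<subseteq> D"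
proof -
  have I: "Id \<subseteq> F" using assms ent_Id by blast
  obtain D where D: "D \<in> \<E>" "F O converse F \<subseteq> D" using assms unfolding ballean_def by meson
  have "converse F \<subseteq> F O converse F"
  proof
    fix p assume "p \<in> converse F"
    then obtain a b where p: "p = (a,b)" "(b,a) \<in> F" by auto
    have "(a,a) \<in> F" using I by auto
    thus "p \<in> F O converse F" using p by auto
  qed
  thus ?thesis using D by auto
qed
lemma ent_comp: assumes "ballean \<E>" "E \<in> \<E>" "F \<in> \<E>" shows "\<exists>D\<in>\<E>. E O F \<subseteq> D"
proof -
  obtain D' where D': "D' \<in> \<E>" "converse F \<subseteq> D'" using ent_inv assms by meson
  obtain D where D: "D \<in> \<E>" "E O converse D' \<subseteq> D" using assms D' unfolding ballean_def by meson
  have "E O F \<subseteq> E O converse D'" using D'(2) by auto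
  thus ?thesis using D by auto
qed
lemma bbounded_base: assumes "ballean \<E>" "bbounded \<E> B"
  shows "\<exists>E\<in>\<E>. B \<subseteq> E `` {x0}"
proof -
  obtain E x where E: "E \<in> \<E>" "B \<subseteq> E `` {x}" using assms(2) unfolding bbounded_def by meson
  obtain H where H: "H \<in> \<E>" "(x0,x) \<in> H" using ent_ex assms(1) by meson
  obtain D where D: "D \<in> \<E>" "H O E \<subseteq> D" using ent_comp assms(1) H E by meson
  have "B \<subseteq> D `` {x0}" using E H D by auto
  thus ?thesis using D by auto
qed

lemma ent_nonempty: "ballean \<E> \<Longrightarrow> \<exists>E. E \<in> \<E>"
  using ent_ex by meson

lemma bbounded_subset: "bbounded \<E> B \<Longrightarrow> A \<subseteq> B \<Longrightarrow> bbounded \<E> A"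
  unfolding bbounded_def by (meson order_trans)

lemma bbounded_singleton: "ballean \<E> \<Longrightarrow> bbounded \<E> {x}"
proof -
  assume b: "ballean \<E>"
  obtain E where "E \<in> \<E>" "(x,x) \<in> E" using ent_ex[OF b] by meson
  thus ?thesis unfolding bbounded_def by auto
qed

lemma bbounded_empty: "ballean \<E> \<Longrightarrow> bbounded \<E> {}"
  using bbounded_singleton bbounded_subset by (metis empty_subsetI)

lemma bbounded_Un: assumes "ballean \<E>" "bbounded \<E> A" "bbounded \<E> B"
  shows "bbounded \<E> (A \<union> B)"
proof -
  obtain x0 :: 'a where True by simp
  obtain E1 where E1: "E1 \<in> \<E>" "A \<subseteq> E1 `` {x0}" using bbounded_base assms by meson
  obtain E2 where E2: "E2 \<in> \<E>" "B \<subseteq> E2 `` {x0}" using bbounded_base assms by meson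
  obtain D where D: "D \<in> \<E>" "E1 O E2 \<subseteq> D" using ent_comp assms(1) E1 E2 by meson
  have I: "Id \<subseteq> E1" "Id \<subseteq> E2" using ent_Id assms(1) E1 E2 by auto
  have "A \<subseteq> D `` {x0}"
  proof
    fix a assume "a \<in> A"
    hence "(x0,a) \<in> E1" using E1 by auto
    moreover have "(a,a) \<in> E2" using I by auto
    ultimately have "(x0,a) \<in> E1 O E2" by auto
    thus "a \<in> D `` {x0}" using D by auto
  qed
  moreover have "B \<subseteq> D `` {x0}"
  proof
    fix a assume "a \<in> B"
    hence "(x0,a) \<in> E2" using E2 by auto
    moreover have "(x0,x0) \<in> E1" using I by auto
    ultimately have "(x0,a) \<in> E1 O E2" by auto
    thus "a \<in> D `` {x0}" using D by auto
  qed
  ultimately have "A \<union> B \<subseteq> D `` {x0}" by auto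
  thus ?thesis unfolding bbounded_def using D by auto
qed

lemma bbounded_Image: assumes "ballean \<E>" "bbounded \<E> B" "E \<in> \<E>"
  shows "bbounded \<E> (E `` B)"
proof -
  obtain x0 :: 'a where True by simp
  obtain H where H: "H \<in> \<E>" "B \<subseteq> H `` {x0}" using bbounded_base assms by meson
  obtain D where D: "D \<in> \<E>" "H O E \<subseteq> D" using ent_comp assms H by meson
  have "E `` B \<subseteq> D `` {x0}" using H D by auto
  thus ?thesis unfolding bbounded_def using D by auto
qed

lemma bbounded_conv_Image: assumes "ballean \<E>" "bbounded \<E> B" "E \<in> \<E>"
  shows "bbounded \<E> (converse E `` B)"
proof -
  obtain D where D: "D \<in> \<E>" "converse E \<subseteq> D" using ent_inv assms by meson
  have "converse E `` B \<subseteq> D `` B" using D by auto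
  thus ?thesis using bbounded_Image[OF assms(1,2) D(1)] bbounded_subset by meson
qed

lemma bbounded_not_UNIV: "unbounded_ballean \<E> \<Longrightarrow> bbounded \<E> B \<Longrightarrow> \<exists>y. y \<notin> B"
  unfolding unbounded_ballean_def by (metis UNIV_eq_I)

definition pe :: "('a \<times> 'a) set \<Rightarrow> ('b \<times> 'b) set \<Rightarrow> (('a \<times> 'b) \<times> ('a \<times> 'b)) set" where
  "pe E1 E2 = {((x,y),(x',y')). (x,x') \<in> E1 \<and> (y,y') \<in> E2}"

lemma prod_ballean_pe: "prod_ballean \<E>X \<E>Y = {pe E1 E2 | E1 E2. E1 \<in> \<E>X \<and> E2 \<in> \<E>Y}"
  unfolding prod_ballean_def pe_def by simp

lemma pe_Image_prod: "pe E1 E2 `` (A \<times> B) = E1 `` A \<times> E2 `` B"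
  unfolding pe_def by force

lemma pe_Image_pt: "pe E1 E2 `` {(x,y)} = E1 `` {x} \<times> E2 `` {y}"
  using pe_Image_prod[of E1 E2 "{x}" "{y}"] by simp

lemma pe_in: "E1 \<in> \<E>X \<Longrightarrow> E2 \<in> \<E>Y \<Longrightarrow> pe E1 E2 \<in> prod_ballean \<E>X \<E>Y"
  unfolding prod_ballean_pe by blast

lemma prod_bounded_iff: assumes "ballean \<E>X" "ballean \<E>Y"
  shows "bbounded (prod_ballean \<E>X \<E>Y) S \<longleftrightarrow>
    (\<exists>C D. bbounded \<E>X C \<and> bbounded \<E>Y D \<and> S \<subseteq> C \<times> D)"
proof
  assume "bbounded (prod_ballean \<E>X \<E>Y) S"
  then obtain P p where P: "P \<in> prod_ballean \<E>X \<E>Y" "S \<subseteq> P `` {p}" unfolding bbounded_def by meson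
  then obtain E1 E2 where E: "E1 \<in> \<E>X" "E2 \<in> \<E>Y" "P = pe E1 E2" unfolding prod_ballean_pe by blast
  obtain x y where p: "p = (x,y)" by (cases p)
  have "S \<subseteq> E1 `` {x} \<times> E2 `` {y}" using P(2) unfolding E(3) p pe_Image_pt .
  moreover have "bbounded \<E>X (E1 `` {x})" "bbounded \<E>Y (E2 `` {y})"
    unfolding bbounded_def using E by auto
  ultimately show "\<exists>C D. bbounded \<E>X C \<and> bbounded \<E>Y D \<and> S \<subseteq> C \<times> D" by meson
next
  assume "\<exists>C D. bbounded \<E>X C \<and> bbounded \<E>Y D \<and> S \<subseteq> C \<times> D"
  then obtain C D where CD: "bbounded \<E>X C" "bbounded \<E>Y D" "S \<subseteq> C \<times> D" by meson
  obtain E1 x where E1: "E1 \<in> \<E>X" "C \<subseteq> E1 `` {x}" using CD unfolding bbounded_def by meson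
  obtain E2 y where E2: "E2 \<in> \<E>Y" "D \<subseteq> E2 `` {y}" using CD unfolding bbounded_def by meson
  have "pe E1 E2 \<in> prod_ballean \<E>X \<E>Y" using pe_in E1 E2 by meson
  moreover have "S \<subseteq> pe E1 E2 `` {(x,y)}" unfolding pe_Image_pt using CD(3) E1(2) E2(2) by auto
  ultimately show "bbounded (prod_ballean \<E>X \<E>Y) S" unfolding bbounded_def by meson
qed

lemma prod_boundedI: assumes "ballean \<E>X" "ballean \<E>Y" "bbounded \<E>X C" "bbounded \<E>Y D"
  "S \<subseteq> C \<times> D" shows "bbounded (prod_ballean \<E>X \<E>Y) S"
  using assms(3-5) prod_bounded_iff[OF assms(1,2), of S] by blast

lemma prod_boundedE: assumes "ballean \<E>X" "ballean \<E>Y" "bbounded (prod_ballean \<E>X \<E>Y) S"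
  obtains C D where "bbounded \<E>X C" "bbounded \<E>Y D" "S \<subseteq> C \<times> D"
  using assms(3) prod_bounded_iff[OF assms(1,2), of S] by blast



lemma phi_psi:
  fixes \<E>X :: "('a \<times> 'a) set set" and \<E>Y :: "('b \<times> 'b) set set"
  assumes bX: "ballean \<E>X" and bY: "ballean \<E>Y"
    and N: "normal_ballean (prod_ballean \<E>X \<E>Y)"
  shows "\<exists>\<Phi> \<Psi>. (\<forall>D. bbounded \<E>Y D \<longrightarrow> bbounded \<E>X (\<Phi> D)) \<and>
     (\<forall>C. bbounded \<E>X C \<longrightarrow> bbounded \<E>Y (\<Psi> C)) \<and>
     (\<forall>C D. bbounded \<E>X C \<longrightarrow> bbounded \<E>Y D \<longrightarrow> C \<subseteq> \<Phi> D \<or> D \<subseteq> \<Psi> C)"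
proof -
  obtain x0 :: 'a where True by simp
  obtain y0 :: 'b where True by simp
  define A :: "('a \<times> 'b) set" where "A = UNIV \<times> {y0}"
  define B :: "('a \<times> 'b) set" where "B = {x0} \<times> UNIV"
  have "asymp_disjoint (prod_ballean \<E>X \<E>Y) A B"
    unfolding asymp_disjoint_def
  proof
    fix P assume "P \<in> prod_ballean \<E>X \<E>Y"
    then obtain E1 E2 where E: "E1 \<in> \<E>X" "E2 \<in> \<E>Y" "P = pe E1 E2" unfolding prod_ballean_pe by blast
    have "P `` A \<inter> P `` B \<subseteq> E1 `` {x0} \<times> E2 `` {y0}"
      unfolding E(3) A_def B_def pe_Image_prod by auto
    moreover have "bbounded \<E>X (E1 `` {x0})" "bbounded \<E>Y (E2 `` {y0})"
      unfolding bbounded_def using E by auto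
    ultimately show "bbounded (prod_ballean \<E>X \<E>Y) (P `` A \<inter> P `` B)"
      using prod_boundedI[OF bX bY] by meson
  qed
  then obtain U V where U: "asymp_nbhd (prod_ballean \<E>X \<E>Y) U A"
    and V: "asymp_nbhd (prod_ballean \<E>X \<E>Y) V B" and UV: "U \<inter> V = {}"
    using N unfolding normal_ballean_def by blast
  obtain E0 where E0: "E0 \<in> \<E>X" using ent_nonempty bX by meson
  obtain F0 where F0: "F0 \<in> \<E>Y" using ent_nonempty bY by meson
  have exPhi: "\<exists>C. bbounded \<E>X C \<and> (- C) \<times> D \<subseteq> U" if D: "bbounded \<E>Y D" for D
  proof -
    obtain E2 where E2: "E2 \<in> \<E>Y" "D \<subseteq> E2 `` {y0}" using bbounded_base[OF bY D] by meson
    have "pe E0 E2 \<in> prod_ballean \<E>X \<E>Y" using pe_in[OF E0 E2(1)] .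
    hence "bbounded (prod_ballean \<E>X \<E>Y) (pe E0 E2 `` A - U)"
      using U unfolding asymp_nbhd_def by (rule bspec[rotated])
    then obtain C D' where CD: "bbounded \<E>X C" "pe E0 E2 `` A - U \<subseteq> C \<times> D'"
      by (elim prod_boundedE[OF bX bY])
    have "Id \<subseteq> E0" using ent_Id bX E0 by meson
    hence "UNIV \<times> E2 `` {y0} \<subseteq> pe E0 E2 `` A" unfolding A_def pe_Image_prod by auto
    have "(- C) \<times> D \<subseteq> U"
    proof (rule subsetI)
      fix p assume "p \<in> (- C) \<times> D"
      then obtain a b where p: "p = (a,b)" "a \<notin> C" "b \<in> D" by blast
      have "(a,b) \<in> pe E0 E2 `` A" using E2(2) p(3) \<open>UNIV \<times> E2 `` {y0} \<subseteq> pe E0 E2 `` A\<close> by blast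
      thus "p \<in> U" using CD(2) p by blast
    qed
    thus ?thesis using CD by meson
  qed
  have exPsi: "\<exists>D. bbounded \<E>Y D \<and> C \<times> (- D) \<subseteq> V" if C: "bbounded \<E>X C" for C
  proof -
    obtain E1 where E1: "E1 \<in> \<E>X" "C \<subseteq> E1 `` {x0}" using bbounded_base[OF bX C] by meson
    have "pe E1 F0 \<in> prod_ballean \<E>X \<E>Y" using pe_in[OF E1(1) F0] .
    hence "bbounded (prod_ballean \<E>X \<E>Y) (pe E1 F0 `` B - V)"
      using V unfolding asymp_nbhd_def by (rule bspec[rotated])
    then obtain C' D where CD: "bbounded \<E>Y D" "pe E1 F0 `` B - V \<subseteq> C' \<times> D"
      by (elim prod_boundedE[OF bX bY])
    have "Id \<subseteq> F0" using ent_Id bY F0 by meson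
    hence "E1 `` {x0} \<times> UNIV \<subseteq> pe E1 F0 `` B" unfolding B_def pe_Image_prod by auto
    have "C \<times> (- D) \<subseteq> V"
    proof (rule subsetI)
      fix p assume "p \<in> C \<times> (- D)"
      then obtain a b where p: "p = (a,b)" "a \<in> C" "b \<notin> D" by blast
      have "(a,b) \<in> pe E1 F0 `` B" using E1(2) p(2) \<open>E1 `` {x0} \<times> UNIV \<subseteq> pe E1 F0 `` B\<close> by blast
      thus "p \<in> V" using CD(2) p by blast
    qed
    thus ?thesis using CD by meson
  qed
  define \<Phi> where "\<Phi> D = (SOME C. bbounded \<E>X C \<and> (- C) \<times> D \<subseteq> U)" for D
  define \<Psi> where "\<Psi> C = (SOME D. bbounded \<E>Y D \<and> C \<times> (- D) \<subseteq> V)" for C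
  have P1: "bbounded \<E>X (\<Phi> D) \<and> (- \<Phi> D) \<times> D \<subseteq> U" if "bbounded \<E>Y D" for D
    unfolding \<Phi>_def using someI_ex[OF exPhi[OF that]] .
  have P2: "bbounded \<E>Y (\<Psi> C) \<and> C \<times> (- \<Psi> C) \<subseteq> V" if "bbounded \<E>X C" for C
    unfolding \<Psi>_def using someI_ex[OF exPsi[OF that]] .
  have "C \<subseteq> \<Phi> D \<or> D \<subseteq> \<Psi> C" if "bbounded \<E>X C" "bbounded \<E>Y D" for C D
  proof (rule ccontr)
    assume "\<not> (C \<subseteq> \<Phi> D \<or> D \<subseteq> \<Psi> C)"
    then obtain x y where "x \<in> C" "x \<notin> \<Phi> D" "y \<in> D" "y \<notin> \<Psi> C" by blast
    hence "(x,y) \<in> U" "(x,y) \<in> V" using P1[OF that(2)] P2[OF that(1)] by auto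
    thus False using UV by auto
  qed
  hence "(\<forall>D. bbounded \<E>Y D \<longrightarrow> bbounded \<E>X (\<Phi> D)) \<and>
     (\<forall>C. bbounded \<E>X C \<longrightarrow> bbounded \<E>Y (\<Psi> C)) \<and>
     (\<forall>C D. bbounded \<E>X C \<longrightarrow> bbounded \<E>Y D \<longrightarrow> C \<subseteq> \<Phi> D \<or> D \<subseteq> \<Psi> C)"
    using P1 P2 by simp
  thus ?thesis by (rule exI[of _ \<Phi>, OF exI[of _ \<Psi>]])
qed



lemma born_iff: "B \<in> bornology \<E> \<longleftrightarrow> bbounded \<E> B"
  unfolding bornology_def by simp

lemma born_no_ub: assumes b: "ballean \<E>" and ub: "unbounded_ballean \<E>"
  shows "\<not> has_ub (bornology \<E>) (bornology \<E>)"
proof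
  assume "has_ub (bornology \<E>) (bornology \<E>)"
  then obtain u where u: "u \<in> bornology \<E>" "\<forall>A\<in>bornology \<E>. A \<subseteq> u" unfolding has_ub_def by meson
  have bu: "bbounded \<E> u" using u(1) by (auto simp: born_iff)
  have "UNIV \<subseteq> u"
  proof
    fix x :: 'a
    have "{x} \<in> bornology \<E>" using bbounded_singleton[OF b] by (auto simp: born_iff)
    thus "x \<in> u" using u(2) by auto
  qed
  hence "bbounded \<E> UNIV" using bbounded_subset[OF bu] by auto
  thus False using ub unfolding unbounded_ballean_def by auto
qed

lemma cofinal_no_ub: assumes "cofinal_in P F" "\<not> has_ub P P" shows "\<not> has_ub P F"
proof
  assume "has_ub P F"
  then obtain u where u: "u \<in> P" "\<forall>A\<in>F. A \<subseteq> u" unfolding has_ub_def by meson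
  have "\<forall>A\<in>P. A \<subseteq> u"
  proof
    fix A assume "A \<in> P"
    then obtain C where "C \<in> F" "A \<subseteq> C" using assms(1) unfolding cofinal_in_def by meson
    thus "A \<subseteq> u" using u(2) by auto
  qed
  hence "has_ub P P" using u(1) unfolding has_ub_def by auto
  thus False using assms(2) by auto
qed

lemma ex_add: assumes "\<not> has_ub P P" shows "\<exists>F. is_add P F"
proof -
  define R where "R = {card_of G | G. G \<subseteq> P \<and> \<not> has_ub P G}"
  have "card_of P \<in> R" unfolding R_def using assms by auto
  hence ne: "R \<noteq> {}" by auto
  have wo: "\<forall>r\<in>R. Well_order r" unfolding R_def by (auto simp: card_of_Well_order)
  obtain r where r: "r \<in> R" "\<forall>r'\<in>R. (r, r') \<in> ordLeq" using exists_minim_Well_order[OF ne wo] by meson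
  then obtain G where G: "r = card_of G" "G \<subseteq> P" "\<not> has_ub P G" unfolding R_def by auto
  have "\<forall>G'. G' \<subseteq> P \<and> \<not> has_ub P G' \<longrightarrow> (card_of G, card_of G') \<in> ordLeq"
  proof (intro allI impI)
    fix G' assume "G' \<subseteq> P \<and> \<not> has_ub P G'"
    hence "card_of G' \<in> R" unfolding R_def by auto
    thus "(card_of G, card_of G') \<in> ordLeq" using r(2) G(1) by auto
  qed
  hence "is_add P G" unfolding is_add_def using G(2,3) by auto
  thus ?thesis by auto
qed

lemma ex_cof: "\<exists>F. is_cof P F"
proof -
  define R where "R = {card_of G | G. cofinal_in P G}"
  have "cofinal_in P P" unfolding cofinal_in_def by auto
  hence "card_of P \<in> R" unfolding R_def by auto
  hence ne: "R \<noteq> {}" by auto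
  have wo: "\<forall>r\<in>R. Well_order r" unfolding R_def by (auto simp: card_of_Well_order)
  obtain r where r: "r \<in> R" "\<forall>r'\<in>R. (r, r') \<in> ordLeq" using exists_minim_Well_order[OF ne wo] by meson
  then obtain G where G: "r = card_of G" "cofinal_in P G" unfolding R_def by auto
  have "\<forall>G'. cofinal_in P G' \<longrightarrow> (card_of G, card_of G') \<in> ordLeq"
  proof (intro allI impI)
    fix G' assume "cofinal_in P G'"
    hence "card_of G' \<in> R" unfolding R_def by auto
    thus "(card_of G, card_of G') \<in> ordLeq" using r(2) G(1) by auto
  qed
  hence "is_cof P G" unfolding is_cof_def using G(2) by auto
  thus ?thesis by auto
qed

lemma add_le_cof: assumes "is_add P F1" "is_cof P F2" "\<not> has_ub P P"
  shows "(card_of F1, card_of F2) \<in> ordLeq"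
proof -
  have c: "cofinal_in P F2" using assms(2) unfolding is_cof_def by auto
  hence "F2 \<subseteq> P" unfolding cofinal_in_def by auto
  moreover have "\<not> has_ub P F2" using cofinal_no_ub[OF c assms(3)] .
  ultimately show ?thesis using assms(1) unfolding is_add_def by auto
qed

lemma cof_le_add_via:
  assumes cof: "\<And>G. G \<subseteq> Q \<Longrightarrow> \<not> has_ub Q G \<Longrightarrow> cofinal_in P (\<Phi> ` G)"
    and F2: "is_cof P F2" and F3: "is_add Q F3"
  shows "(card_of F2, card_of F3) \<in> ordLeq"
proof -
  have "F3 \<subseteq> Q" "\<not> has_ub Q F3" using F3 unfolding is_add_def by auto
  hence "cofinal_in P (\<Phi> ` F3)" using cof by auto
  hence "(card_of F2, card_of (\<Phi> ` F3)) \<in> ordLeq" using F2 unfolding is_cof_def by auto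
  thus ?thesis using card_of_image[of \<Phi> F3] by (rule ordLeq_transitive)
qed

lemma small_ub: assumes "is_add P F" "G \<subseteq> P" "(card_of G, card_of F) \<in> ordLess"
  shows "has_ub P G"
proof (rule ccontr)
  assume "\<not> has_ub P G"
  hence "(card_of F, card_of G) \<in> ordLeq" using assms(1,2) unfolding is_add_def by auto
  thus False using not_ordLess_ordLeq[OF assms(3)] by auto
qed

lemma phi_cofinal:
  assumes \<Phi>: "\<forall>D. bbounded \<E>Y D \<longrightarrow> bbounded \<E>X (\<Phi> D)"
    and \<Psi>: "\<forall>C. bbounded \<E>X C \<longrightarrow> bbounded \<E>Y (\<Psi> C)"
    and R: "\<forall>C D. bbounded \<E>X C \<longrightarrow> bbounded \<E>Y D \<longrightarrow> C \<subseteq> \<Phi> D \<or> D \<subseteq> \<Psi> C"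
    and G: "G \<subseteq> bornology \<E>Y" "\<not> has_ub (bornology \<E>Y) G"
  shows "cofinal_in (bornology \<E>X) (\<Phi> ` G)"
  unfolding cofinal_in_def
proof
  show "\<Phi> ` G \<subseteq> bornology \<E>X" using G(1) \<Phi> by (auto simp: born_iff)
  show "\<forall>A\<in>bornology \<E>X. \<exists>C\<in>\<Phi> ` G. A \<subseteq> C"
  proof
    fix A assume A: "A \<in> bornology \<E>X"
    hence "\<Psi> A \<in> bornology \<E>Y" using \<Psi> by (auto simp: born_iff)
    then obtain D where D: "D \<in> G" "\<not> D \<subseteq> \<Psi> A" using G(2) unfolding has_ub_def by meson
    have "bbounded \<E>X A" "bbounded \<E>Y D" using A D(1) G(1) by (auto simp: born_iff)
    hence "A \<subseteq> \<Phi> D" using R D(2) by auto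
    thus "\<exists>C\<in>\<Phi> ` G. A \<subseteq> C" using D(1) by auto
  qed
qed



lemma wo_total: assumes "Well_order r" "a \<in> Field r" "b \<in> Field r"
  shows "(a,b) \<in> r \<or> (b,a) \<in> r"
  using wo_rel.TOTALS[of r] assms unfolding wo_rel_def by blast

lemma chain_construct:
  fixes r :: "'i rel" and f :: "'i \<Rightarrow> 'a set"
  assumes wo: "Well_order r"
  shows "\<forall>a b. (a,b) \<in> r \<longrightarrow> \<Union>(f ` underS r a) \<union> f a \<subseteq> \<Union>(f ` underS r b) \<union> f b"
proof (intro allI impI)
  fix a b assume ab: "(a,b) \<in> r"
  show "\<Union>(f ` underS r a) \<union> f a \<subseteq> \<Union>(f ` underS r b) \<union> f b"
  proof (cases "a = b")
    case True thus ?thesis by simp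
  next
    case False
    hence a: "a \<in> underS r b" using ab unfolding underS_def by auto
    have tr: "trans r" "antisym r" using wo_rel.TRANS[of r] wo_rel.ANTISYM[of r] wo
      unfolding wo_rel_def by auto
    have "underS r a \<subseteq> underS r b" using underS_incr[OF tr ab] .
    thus ?thesis using a by auto
  qed
qed

lemma Union_ub: assumes "has_ub (bornology \<E>) G" shows "bbounded \<E> (\<Union>G)"
proof -
  obtain u where u: "u \<in> bornology \<E>" "\<forall>A\<in>G. A \<subseteq> u" using assms unfolding has_ub_def by meson
  have "\<Union>G \<subseteq> u" using u(2) by auto
  thus ?thesis using u(1) bbounded_subset by (auto simp: born_iff)
qed

lemma chain_map:
  fixes r :: "'i rel" and MA :: "'i \<Rightarrow> 'a set" and MB :: "'i \<Rightarrow> 'b set"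
  assumes wo: "Well_order r" and bA: "ballean \<E>A" and bB: "ballean \<E>B"
    and uB: "unbounded_ballean \<E>B"
    and MAb: "\<forall>a\<in>Field r. bbounded \<E>A (MA a)"
    and MBb: "\<forall>a\<in>Field r. bbounded \<E>B (MB a)"
    and monoA: "\<forall>a b. (a,b) \<in> r \<longrightarrow> MA a \<subseteq> MA b"
    and monoB: "\<forall>a b. (a,b) \<in> r \<longrightarrow> MB a \<subseteq> MB b"
    and cofA: "\<forall>C. bbounded \<E>A C \<longrightarrow> (\<exists>a\<in>Field r. C \<subseteq> MA a)"
    and cofB: "\<forall>C. bbounded \<E>B C \<longrightarrow> (\<exists>a\<in>Field r. C \<subseteq> MB a)"
    and smallB: "\<forall>a\<in>Field r. \<forall>q. bbounded \<E>B (q ` underS r a)"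
  shows "\<exists>p. (\<forall>B. bbounded \<E>A B \<longrightarrow> bbounded \<E>B (p ` B)) \<and>
             (\<forall>D. bbounded \<E>B D \<longrightarrow> bbounded \<E>A (p -` D))"
proof -
  have wr: "wo_rel r" using wo unfolding wo_rel_def .
  define S where "S x = {a \<in> Field r. x \<in> MA a}" for x
  define lam where "lam x = wo_rel.minim r (S x)" for x
  have Ssub: "S x \<subseteq> Field r" for x unfolding S_def by auto
  have Sne: "S x \<noteq> {}" for x
  proof -
    obtain a where "a \<in> Field r" "{x} \<subseteq> MA a" using cofA bbounded_singleton[OF bA, of x] by meson
    thus ?thesis unfolding S_def by auto
  qed
  have lamS: "lam x \<in> S x" for x
    unfolding lam_def using wo_rel.minim_in[OF wr Ssub Sne] .
  hence lamF: "lam x \<in> Field r" and lamM: "x \<in> MA (lam x)" for x unfolding S_def by auto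
  have lamL: "(lam x, a) \<in> r" if "a \<in> Field r" "x \<in> MA a" for x a
  proof -
    have "a \<in> S x" unfolding S_def using that by auto
    thus ?thesis unfolding lam_def using wo_rel.minim_least[OF wr Ssub] by auto
  qed
  define q where "q b = (SOME y. y \<notin> MB b)" for b
  have qn: "q b \<notin> MB b" if "b \<in> Field r" for b
  proof -
    have "\<exists>y. y \<notin> MB b" using bbounded_not_UNIV[OF uB] MBb that by auto
    thus ?thesis unfolding q_def by (rule someI_ex)
  qed
  define p where "p x = q (lam x)" for x
  have P1: "bbounded \<E>B (p ` B)" if B: "bbounded \<E>A B" for B
  proof -
    obtain a where a: "a \<in> Field r" "B \<subseteq> MA a" using cofA B by meson
    have "p ` B \<subseteq> q ` underS r a \<union> {q a}"
    proof
      fix y assume "y \<in> p ` B"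
      then obtain x where x: "x \<in> B" "y = q (lam x)" unfolding p_def by auto
      have "(lam x, a) \<in> r" using lamL a x(1) by auto
      hence "lam x = a \<or> lam x \<in> underS r a" unfolding underS_def by auto
      thus "y \<in> q ` underS r a \<union> {q a}" using x(2) by auto
    qed
    moreover have "bbounded \<E>B (q ` underS r a \<union> {q a})"
      using bbounded_Un[OF bB smallB[rule_format, OF a(1)] bbounded_singleton[OF bB]] by blast
    ultimately show ?thesis using bbounded_subset by auto
  qed
  have P2: "bbounded \<E>A (p -` D)" if D: "bbounded \<E>B D" for D
  proof -
    obtain b where b: "b \<in> Field r" "D \<subseteq> MB b" using cofB D by meson
    have "p -` D \<subseteq> MA b"
    proof
      fix x assume "x \<in> p -` D"
      hence px: "q (lam x) \<in> MB b" using b(2) unfolding p_def by auto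
      have "(lam x, b) \<in> r"
      proof (rule ccontr)
        assume "(lam x, b) \<notin> r"
        hence "(b, lam x) \<in> r" using wo_total[OF wo lamF b(1)] by auto
        hence "MB b \<subseteq> MB (lam x)" using monoB by auto
        thus False using px qn[OF lamF] by auto
      qed
      hence "MA (lam x) \<subseteq> MA b" using monoA by auto
      thus "x \<in> MA b" using lamM by auto
    qed
    thus ?thesis using bbounded_subset[OF MAb[rule_format, OF b(1)]] by blast
  qed
  show ?thesis using P1 P2 by blast
qed



lemma BG_X:
  fixes \<E>X :: "('a \<times> 'a) set set" and \<E>Y :: "('b \<times> 'b) set set" and p :: "'a \<Rightarrow> 'b"
  assumes bX: "ballean \<E>X" and bY: "ballean \<E>Y"
    and N: "normal_ballean (prod_ballean \<E>X \<E>Y)"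
    and pimg: "\<forall>B. bbounded \<E>X B \<longrightarrow> bbounded \<E>Y (p ` B)"
    and ppre: "\<forall>D. bbounded \<E>Y D \<longrightarrow> bbounded \<E>X (p -` D)"
  shows "bounded_growth \<E>X"
proof -
  obtain y0 :: 'b where True by simp
  define A :: "('a \<times> 'b) set" where "A = {(x, p x) | x. True}"
  define B :: "('a \<times> 'b) set" where "B = UNIV \<times> {y0}"
  have "asymp_disjoint (prod_ballean \<E>X \<E>Y) A B"
    unfolding asymp_disjoint_def
  proof
    fix P assume "P \<in> prod_ballean \<E>X \<E>Y"
    then obtain E1 E2 where E: "E1 \<in> \<E>X" "E2 \<in> \<E>Y" "P = pe E1 E2" unfolding prod_ballean_pe by blast
    define DY where "DY = E2 `` {y0}"
    have DY: "bbounded \<E>Y DY" unfolding DY_def bbounded_def using E(2) by auto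
    define BX where "BX = p -` (converse E2 `` DY)"
    have BX: "bbounded \<E>X BX" unfolding BX_def using ppre bbounded_conv_Image[OF bY DY E(2)] by auto
    have CX: "bbounded \<E>X (E1 `` BX)" using bbounded_Image[OF bX BX E(1)] .
    have "P `` A \<inter> P `` B \<subseteq> E1 `` BX \<times> DY"
    proof
      fix z assume z: "z \<in> P `` A \<inter> P `` B"
      obtain x' y' where zz: "z = (x', y')" by (cases z)
      from z obtain a where a: "a \<in> A" "(a, z) \<in> P" by auto
      then obtain x where x: "a = (x, p x)" unfolding A_def by auto
      have 1: "(x, x') \<in> E1" "(p x, y') \<in> E2" using a(2) unfolding E(3) x zz pe_def by auto
      from z obtain c where c: "c \<in> B" "(c, z) \<in> P" by auto
      then obtain x'' where x'': "c = (x'', y0)" unfolding B_def by auto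
      have 2: "(y0, y') \<in> E2" using c(2) unfolding E(3) x'' zz pe_def by auto
      have "y' \<in> DY" unfolding DY_def using 2 by auto
      hence "x \<in> BX" unfolding BX_def using 1(2) by auto
      thus "z \<in> E1 `` BX \<times> DY" using 1(1) \<open>y' \<in> DY\<close> zz by auto
    qed
    thus "bbounded (prod_ballean \<E>X \<E>Y) (P `` A \<inter> P `` B)"
      using prod_boundedI[OF bX bY CX DY] by auto
  qed
  then obtain U V where U: "asymp_nbhd (prod_ballean \<E>X \<E>Y) U A"
    and V: "asymp_nbhd (prod_ballean \<E>X \<E>Y) V B" and UV: "U \<inter> V = {}"
    using N unfolding normal_ballean_def by blast
  define G where "G = {(x, x'). (x', p x) \<in> U}"
  obtain E0 where E0: "E0 \<in> \<E>X" using ent_nonempty bX by meson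
  obtain F0 where F0: "F0 \<in> \<E>Y" using ent_nonempty bY by meson
  have G1: "bbounded \<E>X (G `` K)" if K: "bbounded \<E>X K" for K
  proof -
    have pK: "bbounded \<E>Y (p ` K)" using pimg K by auto
    obtain E2 where E2: "E2 \<in> \<E>Y" "p ` K \<subseteq> E2 `` {y0}" using bbounded_base[OF bY pK] by meson
    have "pe E0 E2 \<in> prod_ballean \<E>X \<E>Y" using pe_in[OF E0 E2(1)] .
    hence "bbounded (prod_ballean \<E>X \<E>Y) (pe E0 E2 `` B - V)"
      using V unfolding asymp_nbhd_def by (rule bspec[rotated])
    then obtain C D' where CD: "bbounded \<E>X C" "pe E0 E2 `` B - V \<subseteq> C \<times> D'"
      by (elim prod_boundedE[OF bX bY])
    have "Id \<subseteq> E0" using ent_Id bX E0 by meson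
    hence sub: "UNIV \<times> E2 `` {y0} \<subseteq> pe E0 E2 `` B" unfolding B_def pe_Image_prod by auto
    have "G `` K \<subseteq> C"
    proof
      fix x' assume "x' \<in> G `` K"
      then obtain x where x: "x \<in> K" "(x', p x) \<in> U" unfolding G_def by auto
      have "(x', p x) \<notin> V" using x(2) UV by auto
      moreover have "p x \<in> E2 `` {y0}" using E2(2) x(1) by auto
      hence "(x', p x) \<in> pe E0 E2 `` B" using sub by blast
      ultimately show "x' \<in> C" using CD(2) by auto
    qed
    thus ?thesis using bbounded_subset[OF CD(1)] by blast
  qed
  have G2: "\<exists>K. bbounded \<E>X K \<and> (\<forall>x. x \<notin> K \<longrightarrow> E `` {x} \<subseteq> G `` {x})" if E: "E \<in> \<E>X" for E
  proof -
    have "pe E F0 \<in> prod_ballean \<E>X \<E>Y" using pe_in[OF E F0] .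
    hence "bbounded (prod_ballean \<E>X \<E>Y) (pe E F0 `` A - U)"
      using U unfolding asymp_nbhd_def by (rule bspec[rotated])
    then obtain C D where CD: "bbounded \<E>Y D" "pe E F0 `` A - U \<subseteq> C \<times> D"
      by (elim prod_boundedE[OF bX bY])
    have I: "Id \<subseteq> F0" using ent_Id bY F0 by meson
    define K where "K = p -` D"
    have "bbounded \<E>X K" unfolding K_def using ppre CD(1) by auto
    moreover have "E `` {x} \<subseteq> G `` {x}" if x: "x \<notin> K" for x
    proof
      fix x' assume x': "x' \<in> E `` {x}"
      have "(p x, p x) \<in> F0" using I by auto
      hence "((x, p x), (x', p x)) \<in> pe E F0" using x' unfolding pe_def by auto
      moreover have "(x, p x) \<in> A" unfolding A_def by auto
      ultimately have "(x', p x) \<in> pe E F0 `` A" by auto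
      moreover have "(x', p x) \<notin> C \<times> D" using x unfolding K_def by auto
      ultimately have "(x', p x) \<in> U" using CD(2) by auto
      thus "x' \<in> G `` {x}" unfolding G_def by auto
    qed
    ultimately show ?thesis by auto
  qed
  show ?thesis unfolding bounded_growth_def using G1 G2 by blast
qed

lemma BG_Y:
  fixes \<E>X :: "('a \<times> 'a) set set" and \<E>Y :: "('b \<times> 'b) set set" and p :: "'b \<Rightarrow> 'a"
  assumes bX: "ballean \<E>X" and bY: "ballean \<E>Y"
    and N: "normal_ballean (prod_ballean \<E>X \<E>Y)"
    and pimg: "\<forall>B. bbounded \<E>Y B \<longrightarrow> bbounded \<E>X (p ` B)"
    and ppre: "\<forall>D. bbounded \<E>X D \<longrightarrow> bbounded \<E>Y (p -` D)"
  shows "bounded_growth \<E>Y"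
proof -
  obtain x0 :: 'a where True by simp
  define A :: "('a \<times> 'b) set" where "A = {(p y, y) | y. True}"
  define B :: "('a \<times> 'b) set" where "B = {x0} \<times> UNIV"
  have "asymp_disjoint (prod_ballean \<E>X \<E>Y) A B"
    unfolding asymp_disjoint_def
  proof
    fix P assume "P \<in> prod_ballean \<E>X \<E>Y"
    then obtain E1 E2 where E: "E1 \<in> \<E>X" "E2 \<in> \<E>Y" "P = pe E1 E2" unfolding prod_ballean_pe by blast
    define DX where "DX = E1 `` {x0}"
    have DX: "bbounded \<E>X DX" unfolding DX_def bbounded_def using E(1) by auto
    define BY where "BY = p -` (converse E1 `` DX)"
    have BY: "bbounded \<E>Y BY" unfolding BY_def using ppre bbounded_conv_Image[OF bX DX E(1)] by auto
    have CY: "bbounded \<E>Y (E2 `` BY)" using bbounded_Image[OF bY BY E(2)] .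
    have "P `` A \<inter> P `` B \<subseteq> DX \<times> E2 `` BY"
    proof
      fix z assume z: "z \<in> P `` A \<inter> P `` B"
      obtain x' y' where zz: "z = (x', y')" by (cases z)
      from z obtain a where a: "a \<in> A" "(a, z) \<in> P" by auto
      then obtain y where y: "a = (p y, y)" unfolding A_def by auto
      have 1: "(p y, x') \<in> E1" "(y, y') \<in> E2" using a(2) unfolding E(3) y zz pe_def by auto
      from z obtain c where c: "c \<in> B" "(c, z) \<in> P" by auto
      then obtain y'' where y'': "c = (x0, y'')" unfolding B_def by auto
      have 2: "(x0, x') \<in> E1" using c(2) unfolding E(3) y'' zz pe_def by auto
      have "x' \<in> DX" unfolding DX_def using 2 by auto
      hence "y \<in> BY" unfolding BY_def using 1(1) by auto
      thus "z \<in> DX \<times> E2 `` BY" using 1(2) \<open>x' \<in> DX\<close> zz by auto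
    qed
    thus "bbounded (prod_ballean \<E>X \<E>Y) (P `` A \<inter> P `` B)"
      using prod_boundedI[OF bX bY DX CY] by auto
  qed
  then obtain U V where U: "asymp_nbhd (prod_ballean \<E>X \<E>Y) U A"
    and V: "asymp_nbhd (prod_ballean \<E>X \<E>Y) V B" and UV: "U \<inter> V = {}"
    using N unfolding normal_ballean_def by blast
  define G where "G = {(y, y'). (p y, y') \<in> U}"
  obtain E0 where E0: "E0 \<in> \<E>X" using ent_nonempty bX by meson
  obtain F0 where F0: "F0 \<in> \<E>Y" using ent_nonempty bY by meson
  have G1: "bbounded \<E>Y (G `` K)" if K: "bbounded \<E>Y K" for K
  proof -
    have pK: "bbounded \<E>X (p ` K)" using pimg K by auto
    obtain E1 where E1: "E1 \<in> \<E>X" "p ` K \<subseteq> E1 `` {x0}" using bbounded_base[OF bX pK] by meson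
    have "pe E1 F0 \<in> prod_ballean \<E>X \<E>Y" using pe_in[OF E1(1) F0] .
    hence "bbounded (prod_ballean \<E>X \<E>Y) (pe E1 F0 `` B - V)"
      using V unfolding asymp_nbhd_def by (rule bspec[rotated])
    then obtain C' D where CD: "bbounded \<E>Y D" "pe E1 F0 `` B - V \<subseteq> C' \<times> D"
      by (elim prod_boundedE[OF bX bY])
    have "Id \<subseteq> F0" using ent_Id bY F0 by meson
    hence sub: "E1 `` {x0} \<times> UNIV \<subseteq> pe E1 F0 `` B" unfolding B_def pe_Image_prod by auto
    have "G `` K \<subseteq> D"
    proof
      fix y' assume "y' \<in> G `` K"
      then obtain y where y: "y \<in> K" "(p y, y') \<in> U" unfolding G_def by auto
      have "(p y, y') \<notin> V" using y(2) UV by auto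
      moreover have "p y \<in> E1 `` {x0}" using E1(2) y(1) by auto
      hence "(p y, y') \<in> pe E1 F0 `` B" using sub by blast
      ultimately show "y' \<in> D" using CD(2) by auto
    qed
    thus ?thesis using bbounded_subset[OF CD(1)] by blast
  qed
  have G2: "\<exists>K. bbounded \<E>Y K \<and> (\<forall>y. y \<notin> K \<longrightarrow> E `` {y} \<subseteq> G `` {y})" if E: "E \<in> \<E>Y" for E
  proof -
    have "pe E0 E \<in> prod_ballean \<E>X \<E>Y" using pe_in[OF E0 E] .
    hence "bbounded (prod_ballean \<E>X \<E>Y) (pe E0 E `` A - U)"
      using U unfolding asymp_nbhd_def by (rule bspec[rotated])
    then obtain C D where CD: "bbounded \<E>X C" "pe E0 E `` A - U \<subseteq> C \<times> D"
      by (elim prod_boundedE[OF bX bY])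
    have I: "Id \<subseteq> E0" using ent_Id bX E0 by meson
    define K where "K = p -` C"
    have "bbounded \<E>Y K" unfolding K_def using ppre CD(1) by auto
    moreover have "E `` {y} \<subseteq> G `` {y}" if y: "y \<notin> K" for y
    proof
      fix y' assume y': "y' \<in> E `` {y}"
      have "(p y, p y) \<in> E0" using I by auto
      hence "((p y, y), (p y, y')) \<in> pe E0 E" using y' unfolding pe_def by auto
      moreover have "(p y, y) \<in> A" unfolding A_def by auto
      ultimately have "(p y, y') \<in> pe E0 E `` A" by auto
      moreover have "(p y, y') \<notin> C \<times> D" using y unfolding K_def by auto
      ultimately have "(p y, y') \<in> U" using CD(2) by auto
      thus "y' \<in> G `` {y}" unfolding G_def by auto
    qed
    ultimately show ?thesis by auto
  qed
  show ?thesis unfolding bounded_growth_def using G1 G2 by blast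
qed



theorem theorem1p4:
  fixes \<E>X :: "('a \<times> 'a) set set" and \<E>Y :: "('b \<times> 'b) set set"
  assumes "ballean \<E>X" and "ballean \<E>Y"
    and "unbounded_ballean \<E>X" and "unbounded_ballean \<E>Y"
    and "normal_ballean (prod_ballean \<E>X \<E>Y)"
  shows "((\<exists>F. is_add (bornology \<E>X) F) \<and> (\<exists>F. is_cof (bornology \<E>X) F) \<and>
         (\<exists>F. is_add (bornology \<E>Y) F) \<and> (\<exists>F. is_cof (bornology \<E>Y) F) \<and>
         (\<forall>F1 F2 F3 F4. is_add (bornology \<E>X) F1 \<and> is_cof (bornology \<E>X) F2 \<and>
            is_add (bornology \<E>Y) F3 \<and> is_cof (bornology \<E>Y) F4 \<longrightarrow>
            (card_of F1, card_of F2) \<in> ordIso \<and> (card_of F2, card_of F3) \<in> ordIso \<and>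
            (card_of F3, card_of F4) \<in> ordIso)) \<and>
         has_linear_base (prod_ballean \<E>X \<E>Y) \<and>
         bounded_growth \<E>X \<and> bounded_growth \<E>Y"
proof -
  note bX = assms(1) and bY = assms(2) and uX = assms(3) and uY = assms(4) and N = assms(5)
  obtain \<Phi> \<Psi> where \<Phi>: "\<forall>D. bbounded \<E>Y D \<longrightarrow> bbounded \<E>X (\<Phi> D)"
    and \<Psi>: "\<forall>C. bbounded \<E>X C \<longrightarrow> bbounded \<E>Y (\<Psi> C)"
    and R: "\<forall>C D. bbounded \<E>X C \<longrightarrow> bbounded \<E>Y D \<longrightarrow> C \<subseteq> \<Phi> D \<or> D \<subseteq> \<Psi> C"
    using phi_psi[OF bX bY N] by (elim exE conjE)
  have R'': "\<forall>C D. bbounded \<E>Y C \<longrightarrow> bbounded \<E>X D \<longrightarrow> C \<subseteq> \<Psi> D \<or> D \<subseteq> \<Phi> C"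
    using R by blast
  define PX where "PX = bornology \<E>X"
  define PY where "PY = bornology \<E>Y"
  have nX: "\<not> has_ub PX PX" unfolding PX_def using born_no_ub[OF bX uX] .
  have nY: "\<not> has_ub PY PY" unfolding PY_def using born_no_ub[OF bY uY] .
  have cofX: "cofinal_in PX (\<Phi> ` G)" if "G \<subseteq> PY" "\<not> has_ub PY G" for G
    using phi_cofinal[OF \<Phi> \<Psi> R that[unfolded PY_def]] unfolding PX_def .
  have cofY: "cofinal_in PY (\<Psi> ` G)" if "G \<subseteq> PX" "\<not> has_ub PX G" for G
    using phi_cofinal[OF \<Psi> \<Phi> R'' that[unfolded PX_def]] unfolding PY_def .
  have cyc: "(card_of F1, card_of F2) \<in> ordLeq \<and> (card_of F2, card_of F3) \<in> ordLeq \<and>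
     (card_of F3, card_of F4) \<in> ordLeq \<and> (card_of F4, card_of F1) \<in> ordLeq"
    if F: "is_add PX F1" "is_cof PX F2" "is_add PY F3" "is_cof PY F4" for F1 F2 F3 F4
  proof -
    have "(card_of F1, card_of F2) \<in> ordLeq" using add_le_cof[OF F(1,2) nX] .
    moreover have "(card_of F2, card_of F3) \<in> ordLeq" using cof_le_add_via[OF cofX F(2,3)] .
    moreover have "(card_of F3, card_of F4) \<in> ordLeq" using add_le_cof[OF F(3,4) nY] .
    moreover have "(card_of F4, card_of F1) \<in> ordLeq" using cof_le_add_via[OF cofY F(4,1)] .
    ultimately show ?thesis by simp
  qed
  have part1: "\<forall>F1 F2 F3 F4. is_add PX F1 \<and> is_cof PX F2 \<and> is_add PY F3 \<and> is_cof PY F4 \<longrightarrow>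
            (card_of F1, card_of F2) \<in> ordIso \<and> (card_of F2, card_of F3) \<in> ordIso \<and>
            (card_of F3, card_of F4) \<in> ordIso"
  proof (intro allI impI)
    fix F1 F2 F3 F4 assume "is_add PX F1 \<and> is_cof PX F2 \<and> is_add PY F3 \<and> is_cof PY F4"
    hence c: "(card_of F1, card_of F2) \<in> ordLeq" "(card_of F2, card_of F3) \<in> ordLeq"
     "(card_of F3, card_of F4) \<in> ordLeq" "(card_of F4, card_of F1) \<in> ordLeq" using cyc by blast+
    have a: "(card_of F2, card_of F1) \<in> ordLeq"
      using ordLeq_transitive[OF c(2) ordLeq_transitive[OF c(3) c(4)]] .
    have b: "(card_of F3, card_of F2) \<in> ordLeq"
      using ordLeq_transitive[OF c(3) ordLeq_transitive[OF c(4) c(1)]] .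
    have d: "(card_of F4, card_of F3) \<in> ordLeq"
      using ordLeq_transitive[OF c(4) ordLeq_transitive[OF c(1) c(2)]] .
    show "(card_of F1, card_of F2) \<in> ordIso \<and> (card_of F2, card_of F3) \<in> ordIso \<and>
            (card_of F3, card_of F4) \<in> ordIso"
      using c a b d by (simp add: ordIso_iff_ordLeq)
  qed
  obtain F1 where F1: "is_add PX F1" using ex_add[OF nX] by meson
  obtain F2 where F2: "is_cof PX F2" using ex_cof by meson
  obtain F3 where F3: "is_add PY F3" using ex_add[OF nY] by meson
  obtain F4 where F4: "is_cof PY F4" using ex_cof by meson
  have cc: "(card_of F1, card_of F2) \<in> ordLeq \<and> (card_of F2, card_of F3) \<in> ordLeq \<and>
     (card_of F3, card_of F4) \<in> ordLeq \<and> (card_of F4, card_of F1) \<in> ordLeq"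
    using cyc[OF F1 F2 F3 F4] .
  have l23: "(card_of F2, card_of F3) \<in> ordLeq" using cc by simp
  have l21: "(card_of F2, card_of F1) \<in> ordLeq"
    using ordLeq_transitive[OF l23 ordLeq_transitive[of "card_of F3" "card_of F4" "card_of F1"]] cc by simp
  define r where "r = card_of F2"
  have wo: "Well_order r" unfolding r_def by (rule card_of_Well_order)
  have Fr: "Field r = F2" unfolding r_def by (rule Field_card_of)
  have co: "Card_order r" unfolding r_def by (rule card_of_Card_order)
  have uS: "(card_of (underS r a), card_of F2) \<in> ordLess" if "a \<in> F2" for a
    using card_of_underS[OF co, of a] that Fr unfolding r_def by auto
  have imgs: "(card_of (h ` underS r a), card_of F2) \<in> ordLess" if "a \<in> F2" for a and h :: "_ \<Rightarrow> 'c"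
    using ordLeq_ordLess_trans[OF card_of_image uS[OF that]] .
  have smallX: "has_ub PX G" if "G \<subseteq> PX" "(card_of G, card_of F2) \<in> ordLess" for G
    using small_ub[OF F1 that(1) ordLess_ordLeq_trans[OF that(2) l21]] .
  have smallY: "has_ub PY G" if "G \<subseteq> PY" "(card_of G, card_of F2) \<in> ordLess" for G
    using small_ub[OF F3 that(1) ordLess_ordLeq_trans[OF that(2) l23]] .
  have F2P: "F2 \<subseteq> PX" and F2c: "\<forall>A\<in>PX. \<exists>C\<in>F2. A \<subseteq> C"
    using F2 unfolding is_cof_def cofinal_in_def by auto
  have uSF: "underS r a \<subseteq> F2" for a
  proof
    fix b assume "b \<in> underS r a"
    hence "(b,a) \<in> r" by (simp add: underS_def)
    hence "b \<in> Field r" by (rule FieldI1)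
    thus "b \<in> F2" using Fr by simp
  qed
  define MX where "MX a = \<Union>((\<lambda>b. b) ` underS r a) \<union> a" for a
  have MXb: "bbounded \<E>X (MX a)" if a: "a \<in> F2" for a
  proof -
    have "(\<lambda>b. b) ` underS r a \<subseteq> PX" using uSF F2P by auto
    hence "has_ub PX ((\<lambda>b. b) ` underS r a)" using smallX imgs[OF a] by blast
    hence "bbounded \<E>X (\<Union>((\<lambda>b. b) ` underS r a))" using Union_ub unfolding PX_def by blast
    moreover have "bbounded \<E>X a" using a F2P unfolding PX_def by (auto simp: born_iff)
    ultimately show ?thesis unfolding MX_def using bbounded_Un[OF bX] by blast
  qed
  have MXm: "\<forall>a b. (a,b) \<in> r \<longrightarrow> MX a \<subseteq> MX b"
    unfolding MX_def using chain_construct[OF wo, of "\<lambda>b. b"] by simp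
  have MXa: "a \<subseteq> MX a" for a unfolding MX_def by auto
  define g where "g a = \<Psi> (MX a)" for a
  define MY where "MY a = \<Union>(g ` underS r a) \<union> g a" for a
  have gb: "bbounded \<E>Y (g a)" if "a \<in> F2" for a unfolding g_def using \<Psi> MXb[OF that] by auto
  have MYb: "bbounded \<E>Y (MY a)" if a: "a \<in> F2" for a
  proof -
    have "g ` underS r a \<subseteq> PY"
    proof
      fix z assume "z \<in> g ` underS r a"
      then obtain b where b: "b \<in> underS r a" "z = g b" by auto
      hence "b \<in> F2" using uSF by auto
      thus "z \<in> PY" using gb b(2) unfolding PY_def by (simp add: born_iff)
    qed
    hence "has_ub PY (g ` underS r a)" using smallY imgs[OF a] by blast
    hence "bbounded \<E>Y (\<Union>(g ` underS r a))" using Union_ub unfolding PY_def by blast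
    thus ?thesis unfolding MY_def using bbounded_Un[OF bY] gb[OF a] by blast
  qed
  have MYm: "\<forall>a b. (a,b) \<in> r \<longrightarrow> MY a \<subseteq> MY b"
    unfolding MY_def using chain_construct[OF wo, of g] by simp
  have MYa: "g a \<subseteq> MY a" for a unfolding MY_def by auto
  have cX: "\<exists>a\<in>F2. C \<subseteq> MX a" if "bbounded \<E>X C" for C
  proof -
    have "C \<in> PX" using that unfolding PX_def by (auto simp: born_iff)
    then obtain a where "a \<in> F2" "C \<subseteq> a" using F2c by meson
    thus ?thesis using MXa by blast
  qed
  have noub: "\<exists>a\<in>F2. \<not> MX a \<subseteq> u" if u: "bbounded \<E>X u" for u
  proof (rule ccontr)
    assume "\<not> (\<exists>a\<in>F2. \<not> MX a \<subseteq> u)"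
    hence all: "\<forall>a\<in>F2. MX a \<subseteq> u" by blast
    have "\<forall>A\<in>PX. A \<subseteq> u"
    proof
      fix A assume "A \<in> PX"
      hence "bbounded \<E>X A" unfolding PX_def by (simp add: born_iff)
      then obtain a where "a \<in> F2" "A \<subseteq> MX a" using cX by meson
      thus "A \<subseteq> u" using all by blast
    qed
    moreover have "u \<in> PX" using u unfolding PX_def by (auto simp: born_iff)
    ultimately have "has_ub PX PX" unfolding has_ub_def by blast
    thus False using nX by blast
  qed
  have cY: "\<exists>a\<in>F2. D \<subseteq> MY a" if D: "bbounded \<E>Y D" for D
  proof -
    obtain a where a: "a \<in> F2" "\<not> MX a \<subseteq> \<Phi> D" using noub \<Phi> D by meson
    hence "D \<subseteq> g a" unfolding g_def using R MXb[OF a(1)] D by blast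
    thus ?thesis using MYa a(1) by blast
  qed
  have tot: "(a,b) \<in> r \<or> (b,a) \<in> r" if "a \<in> F2" "b \<in> F2" for a b
    using wo_total[OF wo] that Fr by blast
  have lin: "has_linear_base (prod_ballean \<E>X \<E>Y)"
    unfolding has_linear_base_def
  proof (intro exI[of _ "(\<lambda>a. MX a \<times> MY a) ` F2"] conjI)
    show "(\<lambda>a. MX a \<times> MY a) ` F2 \<subseteq> bornology (prod_ballean \<E>X \<E>Y)"
      using prod_boundedI[OF bX bY MXb MYb] by (auto simp: born_iff)
    show "\<forall>A\<in>(\<lambda>a. MX a \<times> MY a) ` F2. \<forall>B\<in>(\<lambda>a. MX a \<times> MY a) ` F2. A \<subseteq> B \<or> B \<subseteq> A"
    proof (intro ballI)
      fix A B assume "A \<in> (\<lambda>a. MX a \<times> MY a) ` F2" "B \<in> (\<lambda>a. MX a \<times> MY a) ` F2"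
      then obtain a b where ab: "a \<in> F2" "b \<in> F2" "A = MX a \<times> MY a" "B = MX b \<times> MY b" by blast
      show "A \<subseteq> B \<or> B \<subseteq> A"
      proof (cases "(a,b) \<in> r")
        case True thus ?thesis using MXm MYm ab(3,4) by blast
      next
        case False hence "(b,a) \<in> r" using tot[OF ab(1,2)] by blast
        thus ?thesis using MXm MYm ab(3,4) by blast
      qed
    qed
    show "\<forall>S\<in>bornology (prod_ballean \<E>X \<E>Y). \<exists>C\<in>(\<lambda>a. MX a \<times> MY a) ` F2. S \<subseteq> C"
    proof
      fix S assume "S \<in> bornology (prod_ballean \<E>X \<E>Y)"
      hence "bbounded (prod_ballean \<E>X \<E>Y) S" by (simp add: born_iff)
      then obtain C D where CD: "bbounded \<E>X C" "bbounded \<E>Y D" "S \<subseteq> C \<times> D"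
        by (elim prod_boundedE[OF bX bY])
      obtain a where a: "a \<in> F2" "C \<subseteq> MX a" using cX CD(1) by meson
      obtain b where b: "b \<in> F2" "D \<subseteq> MY b" using cY CD(2) by meson
      show "\<exists>C\<in>(\<lambda>a. MX a \<times> MY a) ` F2. S \<subseteq> C"
      proof (cases "(a,b) \<in> r")
        case True
        hence "S \<subseteq> MX b \<times> MY b" using MXm a(2) b(2) CD(3) by blast
        thus ?thesis using b(1) by blast
      next
        case False hence "(b,a) \<in> r" using tot[OF a(1) b(1)] by blast
        hence "S \<subseteq> MX a \<times> MY a" using MYm a(2) b(2) CD(3) by blast
        thus ?thesis using a(1) by blast
      qed
    qed
  qed
  have sY: "\<forall>a\<in>Field r. \<forall>q. bbounded \<E>Y (q ` underS r a)"
  proof (intro ballI allI)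
    fix a and q :: "_ \<Rightarrow> 'b" assume "a \<in> Field r"
    hence a: "a \<in> F2" using Fr by simp
    have "(\<lambda>b. {q b}) ` underS r a \<subseteq> PY" using bbounded_singleton[OF bY] unfolding PY_def
      by (auto simp: born_iff)
    hence "has_ub PY ((\<lambda>b. {q b}) ` underS r a)" using smallY imgs[OF a] by blast
    hence "bbounded \<E>Y (\<Union>((\<lambda>b. {q b}) ` underS r a))" using Union_ub unfolding PY_def by blast
    moreover have "\<Union>((\<lambda>b. {q b}) ` underS r a) = q ` underS r a" by auto
    ultimately show "bbounded \<E>Y (q ` underS r a)" by simp
  qed
  have sX: "\<forall>a\<in>Field r. \<forall>q. bbounded \<E>X (q ` underS r a)"
  proof (intro ballI allI)
    fix a and q :: "_ \<Rightarrow> 'a" assume "a \<in> Field r"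
    hence a: "a \<in> F2" using Fr by simp
    have "(\<lambda>b. {q b}) ` underS r a \<subseteq> PX" using bbounded_singleton[OF bX] unfolding PX_def
      by (auto simp: born_iff)
    hence "has_ub PX ((\<lambda>b. {q b}) ` underS r a)" using smallX imgs[OF a] by blast
    hence "bbounded \<E>X (\<Union>((\<lambda>b. {q b}) ` underS r a))" using Union_ub unfolding PX_def by blast
    moreover have "\<Union>((\<lambda>b. {q b}) ` underS r a) = q ` underS r a" by auto
    ultimately show "bbounded \<E>X (q ` underS r a)" by simp
  qed
  have MXb': "\<forall>a\<in>Field r. bbounded \<E>X (MX a)" using MXb Fr by simp
  have MYb': "\<forall>a\<in>Field r. bbounded \<E>Y (MY a)" using MYb Fr by simp
  have cX': "\<forall>C. bbounded \<E>X C \<longrightarrow> (\<exists>a\<in>Field r. C \<subseteq> MX a)" using cX Fr by simp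
  have cY': "\<forall>C. bbounded \<E>Y C \<longrightarrow> (\<exists>a\<in>Field r. C \<subseteq> MY a)" using cY Fr by simp
  obtain p :: "'a \<Rightarrow> 'b" where p: "\<forall>B. bbounded \<E>X B \<longrightarrow> bbounded \<E>Y (p ` B)"
    "\<forall>D. bbounded \<E>Y D \<longrightarrow> bbounded \<E>X (p -` D)"
    using chain_map[OF wo bX bY uY MXb' MYb' MXm MYm cX' cY' sY] by meson
  obtain p' :: "'b \<Rightarrow> 'a" where p': "\<forall>B. bbounded \<E>Y B \<longrightarrow> bbounded \<E>X (p' ` B)"
    "\<forall>D. bbounded \<E>X D \<longrightarrow> bbounded \<E>Y (p' -` D)"
    using chain_map[OF wo bY bX uX MYb' MXb' MYm MXm cY' cX' sX] by meson
  have g1: "bounded_growth \<E>X" using BG_X[OF bX bY N p] .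
  have g2: "bounded_growth \<E>Y" using BG_Y[OF bX bY N p'] .
  have e: "(\<exists>F. is_add PX F) \<and> (\<exists>F. is_cof PX F) \<and> (\<exists>F. is_add PY F) \<and> (\<exists>F. is_cof PY F)"
    using F1 F2 F3 F4 by blast
  show ?thesis using e part1 lin g1 g2 unfolding PX_def PY_def by blast
qed

end
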